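(* Let $\mathcal{P}$ be a partition of $\{1,\dots,n\}$. A subspace $\mathcal{U}$ of $\mathbb{R}^n$ is not $\mathcal{P}$-realizable if and only if there is a symmetric $\mathcal{P}$-block-diagonal matrix $B$ with $\operatorname{tr}(B)>0$ and $v^TBv\le 0$ for all $v\in\mathcal{U}^\perp$.
   Context: A matrix is $\mathcal{P}$-block-diagonal if it is zero outside the principal submatrices indexed by blocks $\mathcal{I}\in\mathcal{P}$. $\mathcal{E}_{\mathcal{P}}=\{Y\succeq 0: Y_{\mathcal{I}}=I\text{ for all }\mathcal{I}\in\mathcal{P}\}$, with $Y_{\mathcal{I}}$ the principal submatrix indexed by $\mathcal{I}$. $\mathcal{U}$ is $\mathcal{P}$-realizable if some $Y\in\mathcal{E}_{\mathcal{P}}$ has nullspace containing $\mathcal{U}$. *)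

theory Defs
  imports "HOL-Analysis.Analysis" "HOL-Library.Disjoint_Sets"
begin

definition psd :: "real^'n^'n \<Rightarrow> bool" where
  "psd Y \<longleftrightarrow> transpose Y = Y \<and> (\<forall>x. 0 \<le> x \<bullet> (Y *v x))"

definition block_diag :: "'n set set \<Rightarrow> real^'n^'n \<Rightarrow> bool" where
  "block_diag P B \<longleftrightarrow> (\<forall>i j. B $ i $ j \<noteq> 0 \<longrightarrow> (\<exists>I\<in>P. i \<in> I \<and> j \<in> I))"

definition E_P :: "'n set set \<Rightarrow> (real^'n^'n) set" where
  "E_P P = {Y. psd Y \<and> (\<forall>I\<in>P. \<forall>i\<in>I. \<forall>j\<in>I. Y $ i $ j = mat 1 $ i $ j)}"

definition realizable :: "'n set set \<Rightarrow> (real^'n) set \<Rightarrow> bool" where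
  "realizable P U \<longleftrightarrow> (\<exists>Y\<in>E_P P. \<forall>u\<in>U. Y *v u = 0)"

end

theory Submission
  imports Defs
begin

definition outer :: "real^'n \<Rightarrow> real^'n \<Rightarrow> real^'n^'n" where
  "outer u w = (\<chi> i j. u$i * w$j)"

lemma bil: "(x::real^'n::finite) \<bullet> (M *v y) = (\<Sum>i\<in>UNIV. \<Sum>j\<in>UNIV. M$i$j * x$i * y$j)"
  by (simp add: inner_vec_def matrix_vector_mult_def sum_distrib_left mult_ac)

lemma inner_mat: "(X::real^'n::finite^'m::finite) \<bullet> Y = (\<Sum>i\<in>UNIV. \<Sum>j\<in>UNIV. X$i$j * Y$i$j)"
  by (simp add: inner_vec_def)

lemma outer_mult: "outer u w *v x = (w \<bullet> x) *\<^sub>R u"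
  by (simp add: outer_def vec_eq_iff matrix_vector_mult_def inner_vec_def sum_distrib_left mult_ac)

lemma inner_outer: "(B::real^'n::finite^'n) \<bullet> outer u u = u \<bullet> (B *v u)"
  by (simp add: bil inner_mat outer_def mult_ac)

lemma sym_bil: "transpose Y = Y \<Longrightarrow> (x::real^'n::finite) \<bullet> (Y *v y) = y \<bullet> (Y *v x)"
  by (metis dot_lmul_matrix inner_commute transpose_transpose vector_transpose_matrix)

lemma col: "((Y::real^'n::finite^'n) *v axis k 1)$j = Y$j$k"
  unfolding matrix_vector_mult_def axis_def by (simp add: if_distrib[where f="\<lambda>x. _ * x"] cong: if_cong)

lemma ax: "axis i 1 \<bullet> ((Y::real^'n::finite^'n) *v axis j 1) = Y$i$j"
  by (simp add: col inner_commute[of "axis i 1"] inner_axis)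

lemma quad_exp: "(x + t *\<^sub>R y) \<bullet> ((Y::real^'n::finite^'n) *v (x + t *\<^sub>R y)) =
   x \<bullet> (Y *v x) + t * (x \<bullet> (Y *v y)) + t * (y \<bullet> (Y *v x)) + t^2 * (y \<bullet> (Y *v y))"
  by (simp add: matrix_vector_right_distrib matrix_vector_mult_scaleR algebra_simps power2_eq_square)

lemma CS:
  assumes "psd (Y::real^'n::finite^'n)"
  shows "(x \<bullet> (Y *v y))^2 \<le> (x \<bullet> (Y *v x)) * (y \<bullet> (Y *v y))"
proof -
  define a where "a = x \<bullet> (Y *v x)"
  define b where "b = x \<bullet> (Y *v y)"
  define d where "d = y \<bullet> (Y *v y)"
  have sy: "y \<bullet> (Y *v x) = b" using assms sym_bil unfolding psd_def b_def by metis
  have q: "\<And>t. 0 \<le> a + 2*t*b + t^2*d"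
  proof -
    fix t
    have "0 \<le> (x + t *\<^sub>R y) \<bullet> (Y *v (x + t *\<^sub>R y))" using assms psd_def by blast
    then show "0 \<le> a + 2*t*b + t^2*d" unfolding quad_exp sy a_def b_def d_def by simp
  qed
  have d0: "0 \<le> d" using assms psd_def d_def by blast
  show ?thesis
  proof (cases "d = 0")
    case True
    have "b = 0"
    proof (rule ccontr)
      assume "b \<noteq> 0"
      then have "0 \<le> a + 2*(-(a+1)/(2*b))*b" using q[of "-(a+1)/(2*b)"] True by simp
      then show False using \<open>b \<noteq> 0\<close> by (simp add: field_simps)
    qed
    then show ?thesis using True a_def b_def d_def by simp
  next
    case False
    then have dp: "d > 0" using d0 by simp
    have "0 \<le> a + 2*(-b/d)*b + (-b/d)^2*d" by (rule q)
    then have "0 \<le> a - b^2/d" using dp by (simp add: power2_eq_square field_simps)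
    then have "b^2 \<le> a * d" using dp by (simp add: field_simps)
    then show ?thesis using a_def b_def d_def by (simp add: mult.commute)
  qed
qed

lemma psd_diag: "psd (Y::real^'n::finite^'n) \<Longrightarrow> 0 \<le> Y$k$k"
  using ax[of k Y k] unfolding psd_def by metis

lemma transpose_outer: "transpose (outer u u) = outer u u"
  by (simp add: outer_def transpose_def vec_eq_iff mult.commute)

lemma decomp:
  fixes B :: "real^'n::finite^'n"
  assumes negB: "\<forall>v\<in>orthogonal_comp U. v \<bullet> (B *v v) \<le> 0"
  shows "psd Y \<Longrightarrow> (\<forall>u\<in>U. Y *v u = 0) \<Longrightarrow> B \<bullet> Y \<le> 0"
proof (induction "card {k. Y$k$k \<noteq> 0}" arbitrary: Y rule: less_induct)
  case less
  show ?case
  proof (cases "\<exists>k. Y$k$k \<noteq> 0")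
    case False
    have "Y = 0"
    proof -
      have "\<And>i j. Y$i$j = 0"
      proof -
        fix i j
        have "(Y$i$j)^2 \<le> Y$i$i * Y$j$j" using CS[OF less.prems(1), of "axis i 1" "axis j 1"] by (simp add: ax)
        then show "Y$i$j = 0" using False by simp
      qed
      then show ?thesis by (simp add: vec_eq_iff)
    qed
    then show ?thesis by simp
  next
    case True
    then obtain k where k: "Y$k$k \<noteq> 0" by blast
    define d where "d = Y$k$k"
    have dp: "d > 0" using psd_diag[OF less.prems(1), of k] k d_def by simp
    define c where "c = Y *v axis k 1"
    define Y' where "Y' = Y - (1/d) *\<^sub>R outer c c"
    have symY: "transpose Y = Y" using less.prems(1) psd_def by blast
    have cx: "x \<bullet> c = axis k 1 \<bullet> (Y *v x)" for x
      unfolding c_def using sym_bil[OF symY] by metis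
    have Y'x: "Y' *v x = Y *v x - ((c \<bullet> x) / d) *\<^sub>R c" for x
      by (simp add: Y'_def matrix_vector_mult_diff_rdistrib outer_mult scaleR_matrix_vector_assoc[symmetric])
    have psdY': "psd Y'"
      unfolding psd_def
    proof
      show "transpose Y' = Y'"
      proof -
        have symc: "\<And>i j. Y$j$i = Y$i$j" using symY unfolding transpose_def vec_eq_iff by simp
        show ?thesis by (simp add: Y'_def transpose_def vec_eq_iff outer_def symc mult.commute)
      qed
    next
      show "\<forall>x. 0 \<le> x \<bullet> (Y' *v x)"
      proof
        fix x
        have cs: "(x \<bullet> c)^2 \<le> (x \<bullet> (Y *v x)) * d"
          using CS[OF less.prems(1), of x "axis k 1"] by (simp add: c_def d_def ax)
        have "x \<bullet> (Y' *v x) = x \<bullet> (Y *v x) - (x \<bullet> c)^2 / d"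
          by (simp add: Y'x inner_diff_right inner_commute power2_eq_square)
        also have "\<dots> \<ge> 0" using cs dp by (simp add: field_simps)
        finally show "0 \<le> x \<bullet> (Y' *v x)" .
      qed
    qed
    have cU: "u \<bullet> c = 0" if "u \<in> U" for u
      using cx[of u] less.prems(2) that by simp
    have Y'U: "\<forall>u\<in>U. Y' *v u = 0"
      using cU less.prems(2) by (simp add: Y'x inner_commute)
    have diag: "Y'$j$j = Y$j$j - (Y$j$k)^2 / d" for j
      by (simp add: Y'_def outer_def c_def col power2_eq_square)
    have sub: "{j. Y'$j$j \<noteq> 0} \<subset> {j. Y$j$j \<noteq> 0}"
    proof
      show "{j. Y'$j$j \<noteq> 0} \<subseteq> {j. Y$j$j \<noteq> 0}"
      proof
        fix j assume "j \<in> {j. Y'$j$j \<noteq> 0}"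
        then have h: "Y'$j$j \<noteq> 0" by simp
        show "j \<in> {j. Y$j$j \<noteq> 0}"
        proof (rule ccontr)
          assume "j \<notin> {j. Y$j$j \<noteq> 0}"
          then have z: "Y$j$j = 0" by simp
          have "(Y$j$k)^2 \<le> Y$j$j * Y$k$k" using CS[OF less.prems(1), of "axis j 1" "axis k 1"] by (simp add: ax)
          then have "Y$j$k = 0" using z by simp
          then show False using h z diag[of j] by simp
        qed
      qed
      have "Y'$k$k = 0" using diag[of k] dp d_def by (simp add: power2_eq_square)
      then show "{j. Y'$j$j \<noteq> 0} \<noteq> {j. Y$j$j \<noteq> 0}" using k by blast
    qed
    have IH: "B \<bullet> Y' \<le> 0"
      using less.hyps[OF psubset_card_mono[OF _ sub] psdY' Y'U] by simp
    have cperp: "c \<in> orthogonal_comp U"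
      using cU by (simp add: orthogonal_comp_def orthogonal_def)
    have "B \<bullet> Y = B \<bullet> Y' + (1/d) * (c \<bullet> (B *v c))"
      by (simp add: Y'_def inner_diff_right inner_outer)
    also have "\<dots> \<le> 0" using IH negB cperp dp
      by (smt (verit) divide_nonneg_pos mult_nonneg_nonpos)
    finally show ?thesis .
  qed
qed

definition blk :: "'n set set \<Rightarrow> 'n \<Rightarrow> 'n \<Rightarrow> bool" where
  "blk P i j \<longleftrightarrow> (\<exists>I\<in>P. i \<in> I \<and> j \<in> I)"

definition LP :: "'n set set \<Rightarrow> real^'n^'n \<Rightarrow> real^'n^'n" where
  "LP P X = (\<chi> i j. if blk P i j then X$i$j else 0)"

lemma inner_trace:
  fixes B Y :: "real^'n::finite^'n"
  assumes "block_diag P B" "Y \<in> E_P P"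
  shows "B \<bullet> Y = trace B"
proof -
  have "B$i$j * Y$i$j = (if i = j then B$i$i else 0)" for i j
  proof (cases "B$i$j = 0")
    case True then show ?thesis by auto
  next
    case False
    then obtain I where "I \<in> P" "i \<in> I" "j \<in> I" using assms(1) block_diag_def by blast
    then have "Y$i$j = mat 1 $ i $ j" using assms(2) E_P_def by blast
    then show ?thesis by (auto simp: mat_def)
  qed
  then show ?thesis by (simp add: inner_mat trace_def)
qed

lemma blk_refl: "partition_on UNIV P \<Longrightarrow> blk P i i"
  unfolding partition_on_def blk_def by blast

lemma linear_LP: "linear (LP P)"
  by (rule linearI) (auto simp: LP_def vec_eq_iff)

lemma LP_adj: "LP P X \<bullet> Y = X \<bullet> LP P Y"
  unfolding inner_mat LP_def by (auto intro!: sum.cong)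

lemma psd_convex: "convex {Y. psd (Y::real^'n::finite^'n) \<and> (\<forall>u\<in>U. Y *v u = 0)}"
  unfolding convex_def
proof (intro ballI allI impI, simp only: mem_Collect_eq, intro conjI)
  fix x y :: "real^'n^'n" and a b :: real
  assume x: "psd x \<and> (\<forall>u\<in>U. x *v u = 0)" and y: "psd y \<and> (\<forall>u\<in>U. y *v u = 0)"
    and ab: "0 \<le> a" "0 \<le> b" "a + b = 1"
  show "psd (a *\<^sub>R x + b *\<^sub>R y)"
    unfolding psd_def
  proof
    show "transpose (a *\<^sub>R x + b *\<^sub>R y) = a *\<^sub>R x + b *\<^sub>R y"
      using x y unfolding psd_def by (simp add: transpose_def vec_eq_iff)
    show "\<forall>v. 0 \<le> v \<bullet> ((a *\<^sub>R x + b *\<^sub>R y) *v v)"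
      using x y ab unfolding psd_def
      by (simp add: matrix_vector_mult_add_rdistrib scaleR_matrix_vector_assoc[symmetric] inner_add_right)
  qed
  show "\<forall>u\<in>U. (a *\<^sub>R x + b *\<^sub>R y) *v u = 0"
    using x y by (simp add: matrix_vector_mult_add_rdistrib scaleR_matrix_vector_assoc[symmetric])
qed

lemma inner_transpose: "transpose (M::real^'n::finite^'n) \<bullet> X = M \<bullet> transpose X"
  unfolding inner_mat transpose_def by (simp add: sum.swap[of "\<lambda>i j. M$j$i * X$i$j"])

lemma inner_mat1: "(M::real^'n::finite^'n) \<bullet> mat 1 = trace M"
  unfolding inner_mat trace_def mat_def by (simp add: if_distrib[where f="\<lambda>x. _ * x"] cong: if_cong)

lemma trace_outer: "trace (outer u u) = u \<bullet> u"
  by (simp add: trace_def outer_def inner_vec_def)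

lemma hard:
  fixes P :: "'n::finite set set" and U :: "(real^'n) set"
  assumes part: "partition_on UNIV P" and nr: "\<not> realizable P U"
  shows "\<exists>B::real^'n^'n. transpose B = B \<and> block_diag P B \<and> trace B > 0 \<and>
        (\<forall>v\<in>orthogonal_comp U. v \<bullet> (B *v v) \<le> 0)"
proof -
  define S0 where "S0 = orthogonal_comp U \<inter> sphere (0::real^'n) 1"
  define g where "g = (\<lambda>v::real^'n. outer v v)"
  define T where "T = convex hull (LP P ` g ` S0)"
  define n where "n = real CARD('n)"
  define z where "z = inverse n *\<^sub>R (mat 1 :: real^'n^'n)"
  have np: "n > 0" unfolding n_def by simp
  have cS0: "compact S0" unfolding S0_def
    by (intro closed_Int_compact closed_subspace subspace_orthogonal_comp compact_sphere)
  have cont: "continuous_on S0 (LP P \<circ> g)"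
    unfolding LP_def g_def outer_def o_def
    apply (intro continuous_on_vec_lambda)
    subgoal for i j by (cases "blk P i j") (auto intro!: continuous_intros)
    done
  have compT: "compact T" unfolding T_def image_comp
    by (intro compact_convex_hull compact_continuous_image cont cS0)
  have zT: "z \<notin> T"
  proof
    assume "z \<in> T"
    then have "z \<in> LP P ` (convex hull (g ` S0))"
      unfolding T_def using convex_hull_linear_image[OF linear_LP] by metis
    then obtain Y where Y: "Y \<in> convex hull (g ` S0)" and zY: "z = LP P Y" by blast
    have sub: "g ` S0 \<subseteq> {Y. psd Y \<and> (\<forall>u\<in>U. Y *v u = 0)}"
    proof
      fix x assume "x \<in> g ` S0"
      then obtain v where v: "v \<in> S0" "x = outer v v" unfolding g_def by blast
      have "psd x" unfolding psd_def v(2)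
        by (simp add: transpose_outer outer_mult inner_commute[of _ v])
      moreover have "\<forall>u\<in>U. x *v u = 0"
        using v unfolding S0_def orthogonal_comp_def orthogonal_def
        by (simp add: outer_mult inner_commute)
      ultimately show "x \<in> {Y. psd Y \<and> (\<forall>u\<in>U. Y *v u = 0)}" by simp
    qed
    have YC: "psd Y \<and> (\<forall>u\<in>U. Y *v u = 0)"
      using hull_minimal[where S=convex, OF sub psd_convex[of U]] Y by blast
    define Y' where "Y' = n *\<^sub>R Y"
    have "psd Y'" using YC np unfolding psd_def Y'_def
      by (simp add: transpose_scalar scaleR_matrix_vector_assoc[symmetric])
    moreover have "\<forall>u\<in>U. Y' *v u = 0" using YC unfolding Y'_def
      by (simp add: scaleR_matrix_vector_assoc[symmetric])
    moreover have "\<forall>I\<in>P. \<forall>i\<in>I. \<forall>j\<in>I. Y' $ i $ j = mat 1 $ i $ j"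
    proof (intro ballI)
      fix I i j assume "I \<in> P" "i \<in> I" "j \<in> I"
      then have b: "blk P i j" unfolding blk_def by blast
      have "z $ i $ j = Y$i$j" using zY b by (simp add: LP_def)
      then show "Y' $ i $ j = mat 1 $ i $ j" using np unfolding Y'_def z_def by (simp add: field_simps)
    qed
    ultimately have "realizable P U" unfolding realizable_def E_P_def by blast
    then show False using nr by simp
  qed
  obtain a b where ab: "a \<bullet> z < b" "\<forall>x\<in>T. b < a \<bullet> x"
  proof -
    have "convex T" unfolding T_def by (rule convex_convex_hull)
    from separating_hyperplane_closed_point[OF this compact_imp_closed[OF compT] zT]
    obtain a b where "a \<bullet> z < b" "\<forall>x\<in>T. b < a \<bullet> x" by blast
    then show ?thesis by (rule that)
  qed
  define W where "W = - a"
  define c where "c = - b"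
  define M where "M = LP P W"
  define B where "B = (1/2) *\<^sub>R (M + transpose M) - c *\<^sub>R mat 1"
  have Bij: "B$i$j = (M$i$j + M$j$i)/2 - c * (if i = j then 1 else 0)" for i j
    by (simp add: B_def transpose_def mat_def)
  have "transpose B = B" by (simp add: vec_eq_iff transpose_def Bij)
  moreover have "block_diag P B"
    unfolding block_diag_def
  proof (intro allI impI)
    fix i j assume h: "B$i$j \<noteq> 0"
    show "\<exists>I\<in>P. i \<in> I \<and> j \<in> I"
    proof (rule ccontr)
      assume nb: "\<not> (\<exists>I\<in>P. i \<in> I \<and> j \<in> I)"
      then have "\<not> blk P i j" "\<not> blk P j i" unfolding blk_def by auto
      moreover have "i \<noteq> j" using nb blk_refl[OF part, of i] unfolding blk_def by blast
      ultimately show False using h by (simp add: Bij M_def LP_def)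
    qed
  qed
  moreover have "trace B > 0"
  proof -
    have Mii: "M$i$i = W$i$i" for i using blk_refl[OF part, of i] by (simp add: M_def LP_def)
    have tB: "trace B = trace W - c * n"
      by (simp add: trace_def Bij Mii n_def sum_subtractf)
    have "a \<bullet> z = inverse n * trace a" by (simp add: z_def inner_mat1)
    then have "inverse n * trace W > c" using ab(1) by (simp add: W_def c_def trace_def sum_negf)
    then have "trace W > c * n" using np by (simp add: field_simps)
    then show ?thesis using tB by simp
  qed
  moreover have "\<forall>v\<in>orthogonal_comp U. v \<bullet> (B *v v) \<le> 0"
  proof
    fix v assume v: "v \<in> orthogonal_comp U"
    have unit: "u \<bullet> (B *v u) < 0" if u: "u \<in> S0" for u
    proof -
      have uu: "u \<bullet> u = 1" using u unfolding S0_def by (simp add: dot_square_norm)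
      have xT: "LP P (g u) \<in> T" unfolding T_def by (intro hull_inc imageI u)
      have "M \<bullet> outer u u = W \<bullet> LP P (g u)" by (simp add: M_def LP_adj g_def)
      also have "\<dots> < c" using ab(2) xT by (simp add: W_def c_def)
      finally have Mc: "M \<bullet> outer u u < c" .
      have "u \<bullet> (B *v u) = B \<bullet> outer u u" by (simp add: inner_outer)
      also have "\<dots> = (1/2) * (M \<bullet> outer u u + M \<bullet> outer u u) - c"
        by (simp add: B_def inner_diff_left inner_add_left inner_transpose transpose_outer
              inner_commute[of "mat 1"] inner_mat1 trace_outer uu)
      finally show ?thesis using Mc by simp
    qed
    show "v \<bullet> (B *v v) \<le> 0"
    proof (cases "v = 0")
      case True then show ?thesis by simp
    next
      case False
      define u where "u = (1 / norm v) *\<^sub>R v"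
      have "u \<in> S0" unfolding S0_def u_def using v False
        by (simp add: subspace_scale[OF subspace_orthogonal_comp])
      then have "u \<bullet> (B *v u) < 0" by (rule unit)
      moreover have "v = norm v *\<^sub>R u" using False by (simp add: u_def)
      ultimately show ?thesis
      proof -
        have "v \<bullet> (B *v v) = (norm v)^2 * (u \<bullet> (B *v u))"
          by (subst (1 2) \<open>v = norm v *\<^sub>R u\<close>) (simp add: matrix_vector_mult_scaleR power2_eq_square)
        then show ?thesis using \<open>u \<bullet> (B *v u) < 0\<close>
          by (simp add: mult_nonneg_nonpos)
      qed
    qed
  qed
  ultimately show ?thesis by (intro exI[of _ B]) simp
qed

theorem lemma5p5:
  fixes P :: "'n::finite set set" and U :: "(real^'n) set"
  assumes "partition_on UNIV P" and "subspace U"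
  shows "\<not> realizable P U \<longleftrightarrow>
    (\<exists>B::real^'n^'n. transpose B = B \<and> block_diag P B \<and> trace B > 0 \<and>
        (\<forall>v\<in>orthogonal_comp U. v \<bullet> (B *v v) \<le> 0))"
proof
  assume "\<not> realizable P U"
  then show "\<exists>B::real^'n^'n. transpose B = B \<and> block_diag P B \<and> trace B > 0 \<and>
        (\<forall>v\<in>orthogonal_comp U. v \<bullet> (B *v v) \<le> 0)"
    using hard[OF assms(1)] by blast
next
  assume "\<exists>B::real^'n^'n. transpose B = B \<and> block_diag P B \<and> trace B > 0 \<and>
        (\<forall>v\<in>orthogonal_comp U. v \<bullet> (B *v v) \<le> 0)"
  then obtain B :: "real^'n^'n" where B: "block_diag P B" "trace B > 0"
    "\<forall>v\<in>orthogonal_comp U. v \<bullet> (B *v v) \<le> 0" by blast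
  show "\<not> realizable P U"
  proof
    assume "realizable P U"
    then obtain Y where Y: "Y \<in> E_P P" "\<forall>u\<in>U. Y *v u = 0" unfolding realizable_def by blast
    have "psd Y" using Y(1) E_P_def by blast
    then have "B \<bullet> Y \<le> 0" using decomp[OF B(3)] Y(2) by blast
    moreover have "B \<bullet> Y = trace B" by (rule inner_trace[OF B(1) Y(1)])
    ultimately show False using B(2) by simp
  qed
qed

end
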